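(* Let $G$ be a maximal $3$-$\gamma_{c}$-vertex critical graph, let $I$ be a maximum independent set of $G$, and let $W$ be a vertex set inducing a maximum complete subgraph of $G$, chosen (among all such sets) so that $|I\cap W|$ is minimum. If $|I|+|W|=n-1$, where $n=|V(G)|$, then $|W\cap I|=0$.
   Context: All graphs are finite, simple and connected. A set $D\subseteq V(G)$ is a connected dominating set of $G$ if every vertex of $G$ is in $D$ or adjacent to a vertex of $D$, and $G[D]$ is connected; $\gamma_{c}(G)$ is the minimum cardinality of such a set. $G$ is $k$-$\gamma_{c}$-edge critical if $\gamma_{c}(G)=k$ and $\gamma_{c}(G+uv)<k$ for every pair of non-adjacent vertices $u,v$. A $2$-connected graph $G$ is $k$-$\gamma_{c}$-vertex critical if $\gamma_{c}(G)=k$ and $\gamma_{c}(G-v)<k$ for every $v\in V(G)$. $G$ is maximal $k$-$\gamma_{c}$-vertex critical if it is both $k$-$\gamma_{c}$-edge critical and $k$-$\gamma_{c}$-vertex critical. *)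

theory Defs
  imports Main
begin

definition simple_graph :: "'a set \<Rightarrow> ('a \<Rightarrow> 'a \<Rightarrow> bool) \<Rightarrow> bool" where
  "simple_graph V E \<longleftrightarrow> finite V \<and> V \<noteq> {} \<and>
     (\<forall>x y. E x y \<longrightarrow> x \<in> V \<and> y \<in> V \<and> x \<noteq> y \<and> E y x)"

definition induced_connected :: "('a \<Rightarrow> 'a \<Rightarrow> bool) \<Rightarrow> 'a set \<Rightarrow> bool" where
  "induced_connected E S \<longleftrightarrow> S \<noteq> {} \<and>
     (\<forall>x\<in>S. \<forall>y\<in>S. (\<lambda>a b. E a b \<and> a \<in> S \<and> b \<in> S)\<^sup>*\<^sup>* x y)"

definition graph_connected :: "'a set \<Rightarrow> ('a \<Rightarrow> 'a \<Rightarrow> bool) \<Rightarrow> bool" where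
  "graph_connected V E \<longleftrightarrow> induced_connected E V"

definition dominating :: "'a set \<Rightarrow> ('a \<Rightarrow> 'a \<Rightarrow> bool) \<Rightarrow> 'a set \<Rightarrow> bool" where
  "dominating V E D \<longleftrightarrow> D \<subseteq> V \<and> (\<forall>v\<in>V. v \<in> D \<or> (\<exists>d\<in>D. E v d))"

definition connected_dominating :: "'a set \<Rightarrow> ('a \<Rightarrow> 'a \<Rightarrow> bool) \<Rightarrow> 'a set \<Rightarrow> bool" where
  "connected_dominating V E D \<longleftrightarrow> dominating V E D \<and> induced_connected E D"

definition gamma_c :: "'a set \<Rightarrow> ('a \<Rightarrow> 'a \<Rightarrow> bool) \<Rightarrow> nat" where
  "gamma_c V E = (LEAST k. \<exists>D. connected_dominating V E D \<and> card D = k)"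

definition add_edge :: "('a \<Rightarrow> 'a \<Rightarrow> bool) \<Rightarrow> 'a \<Rightarrow> 'a \<Rightarrow> ('a \<Rightarrow> 'a \<Rightarrow> bool)" where
  "add_edge E u v = (\<lambda>x y. E x y \<or> (x = u \<and> y = v) \<or> (x = v \<and> y = u))"

definition del_vertex :: "('a \<Rightarrow> 'a \<Rightarrow> bool) \<Rightarrow> 'a \<Rightarrow> ('a \<Rightarrow> 'a \<Rightarrow> bool)" where
  "del_vertex E v = (\<lambda>x y. E x y \<and> x \<noteq> v \<and> y \<noteq> v)"

definition two_connected :: "'a set \<Rightarrow> ('a \<Rightarrow> 'a \<Rightarrow> bool) \<Rightarrow> bool" where
  "two_connected V E \<longleftrightarrow> card V \<ge> 3 \<and> graph_connected V E \<and>
     (\<forall>v\<in>V. graph_connected (V - {v}) (del_vertex E v))"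

definition edge_critical :: "nat \<Rightarrow> 'a set \<Rightarrow> ('a \<Rightarrow> 'a \<Rightarrow> bool) \<Rightarrow> bool" where
  "edge_critical k V E \<longleftrightarrow> gamma_c V E = k \<and>
     (\<forall>u\<in>V. \<forall>v\<in>V. u \<noteq> v \<and> \<not> E u v \<longrightarrow> gamma_c V (add_edge E u v) < k)"

definition vertex_critical :: "nat \<Rightarrow> 'a set \<Rightarrow> ('a \<Rightarrow> 'a \<Rightarrow> bool) \<Rightarrow> bool" where
  "vertex_critical k V E \<longleftrightarrow> two_connected V E \<and> gamma_c V E = k \<and>
     (\<forall>v\<in>V. gamma_c (V - {v}) (del_vertex E v) < k)"

definition maximal_vertex_critical :: "nat \<Rightarrow> 'a set \<Rightarrow> ('a \<Rightarrow> 'a \<Rightarrow> bool) \<Rightarrow> bool" where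
  "maximal_vertex_critical k V E \<longleftrightarrow> edge_critical k V E \<and> vertex_critical k V E"

definition independent_set :: "'a set \<Rightarrow> ('a \<Rightarrow> 'a \<Rightarrow> bool) \<Rightarrow> 'a set \<Rightarrow> bool" where
  "independent_set V E I \<longleftrightarrow> I \<subseteq> V \<and> (\<forall>x\<in>I. \<forall>y\<in>I. \<not> E x y)"

definition max_independent_set :: "'a set \<Rightarrow> ('a \<Rightarrow> 'a \<Rightarrow> bool) \<Rightarrow> 'a set \<Rightarrow> bool" where
  "max_independent_set V E I \<longleftrightarrow> independent_set V E I \<and>
     (\<forall>J. independent_set V E J \<longrightarrow> card J \<le> card I)"

definition clique :: "'a set \<Rightarrow> ('a \<Rightarrow> 'a \<Rightarrow> bool) \<Rightarrow> 'a set \<Rightarrow> bool" where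
  "clique V E W \<longleftrightarrow> W \<subseteq> V \<and> (\<forall>x\<in>W. \<forall>y\<in>W. x \<noteq> y \<longrightarrow> E x y)"

definition max_clique :: "'a set \<Rightarrow> ('a \<Rightarrow> 'a \<Rightarrow> bool) \<Rightarrow> 'a set \<Rightarrow> bool" where
  "max_clique V E W \<longleftrightarrow> clique V E W \<and> (\<forall>W'. clique V E W' \<longrightarrow> card W' \<le> card W)"

end

theory Submission
  imports Defs
begin

definition dom2 :: "'a set \<Rightarrow> ('a \<Rightarrow> 'a \<Rightarrow> bool) \<Rightarrow> 'a \<Rightarrow> 'a \<Rightarrow> bool" where
  "dom2 V E s t \<longleftrightarrow> s \<in> V \<and> t \<in> V \<and> (s = t \<or> E s t) \<and>
     (\<forall>w\<in>V. w = s \<or> w = t \<or> E w s \<or> E w t)"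

lemma sg_facts:
  assumes "simple_graph V E"
  shows "finite V" "\<And>u v. E u v \<Longrightarrow> E v u" "\<And>u v. E u v \<Longrightarrow> u \<in> V"
    "\<And>u v. E u v \<Longrightarrow> v \<in> V" "\<And>u. \<not> E u u"
  using assms unfolding simple_graph_def by blast+

lemma L_small:
  assumes sg: "simple_graph V E" and g3: "gamma_c V E = 3" and d: "dom2 V E s t"
  shows False
proof -
  note F = sg_facts[OF sg]
  let ?D = "{s, t}"
  have cds: "connected_dominating V E ?D"
    unfolding connected_dominating_def dominating_def induced_connected_def
  proof (intro conjI ballI)
    show "?D \<subseteq> V" using d unfolding dom2_def by auto
    fix v assume "v \<in> V" then show "v \<in> ?D \<or> (\<exists>d\<in>?D. E v d)" using d unfolding dom2_def by auto
  next
    show "?D \<noteq> {}" by simp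
  next
    fix u v assume uv: "u \<in> ?D" "v \<in> ?D"
    show "(\<lambda>a b. E a b \<and> a \<in> ?D \<and> b \<in> ?D)\<^sup>*\<^sup>* u v"
    proof (cases "u = v")
      case True then show ?thesis by simp
    next
      case False
      then have "E u v" using uv d F(2) unfolding dom2_def by auto
      then show ?thesis using uv by (intro r_into_rtranclp) simp
    qed
  qed
  have "gamma_c V E \<le> card ?D" unfolding gamma_c_def
    by (rule Least_le) (use cds in blast)
  also have "\<dots> \<le> 2" by (simp add: card_insert_le_m1)
  finally show False using g3 by simp
qed

lemma path_edge:
  assumes "(\<lambda>a b. E a b \<and> a \<in> S \<and> b \<in> S)\<^sup>*\<^sup>* u v" "u \<noteq> v"
  shows "\<exists>z. E u z \<and> z \<in> S"
  using assms(1)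
proof (cases rule: converse_rtranclpE)
  case base then show ?thesis using assms(2) by simp
next
  case (step y) then show ?thesis by blast
qed

lemma small_cds:
  assumes irr: "\<And>z. \<not> E z z" and fin: "finite V"
    and cds: "connected_dominating V E D" and c: "card D < 3"
  shows "\<exists>s t. dom2 V E s t"
proof -
  have DV: "D \<subseteq> V" and dm: "\<forall>v\<in>V. v \<in> D \<or> (\<exists>d\<in>D. E v d)" and ic: "induced_connected E D"
    using cds unfolding connected_dominating_def dominating_def by auto
  have ne: "D \<noteq> {}" using ic unfolding induced_connected_def by auto
  have finD: "finite D" using DV fin finite_subset by auto
  then have "card D \<noteq> 0" using ne by simp
  then have "card D = 1 \<or> card D = 2" using c by linarith
  then show ?thesis
  proof
    assume "card D = 1"
    then obtain s where "D = {s}" using card_1_singletonE by blast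
    then have "dom2 V E s s" using DV dm unfolding dom2_def by auto
    then show ?thesis by blast
  next
    assume "card D = 2"
    then obtain s t where st: "D = {s, t}" "s \<noteq> t" unfolding card_2_iff by blast
    then have "(\<lambda>a b. E a b \<and> a \<in> D \<and> b \<in> D)\<^sup>*\<^sup>* s t" using ic unfolding induced_connected_def by auto
    then have "\<exists>z. E s z \<and> z \<in> D" by (rule path_edge[OF _ st(2)])
    then obtain z where "E s z" "z \<in> D" by blast
    then have "E s t" using st irr by auto
    then have "dom2 V E s t" using DV dm st unfolding dom2_def by auto
    then show ?thesis by blast
  qed
qed

lemma gamma_lt3:
  assumes irr: "\<And>z. \<not> E z z" and fin: "finite V"
    and cdsV: "connected_dominating V E V" and g: "gamma_c V E < 3"
  shows "\<exists>s t. dom2 V E s t"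
proof -
  let ?P = "\<lambda>k. \<exists>D. connected_dominating V E D \<and> card D = k"
  have "?P (gamma_c V E)" unfolding gamma_c_def by (rule LeastI_ex) (use cdsV in blast)
  then obtain D where "connected_dominating V E D" "card D = gamma_c V E" by blast
  then show ?thesis using small_cds[where E=E and V=V and D=D, OF irr fin] g by simp
qed

lemma neighbor:
  assumes "graph_connected V E" "u \<in> V" "v \<in> V" "u \<noteq> v"
  shows "\<exists>z. E v z \<and> z \<in> V"
proof -
  have "(\<lambda>a b. E a b \<and> a \<in> V \<and> b \<in> V)\<^sup>*\<^sup>* v u"
    using assms unfolding graph_connected_def induced_connected_def by auto
  then have "\<exists>z. E v z \<and> z \<in> V" by (rule path_edge) (use assms(4) in simp)
  then show ?thesis by blast
qed


lemma dom2_sym: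
  assumes "\<And>u v. E u v \<Longrightarrow> E v u" "dom2 V E s t"
  shows "dom2 V E t s"
  using assms unfolding dom2_def by blast

lemma no_almost:
  assumes sg: "simple_graph V E" and g3: "gamma_c V E = 3" and conn: "graph_connected V E"
    and u: "u \<in> V" and v: "v \<in> V" and uv: "u \<noteq> v"
    and dm: "\<forall>w\<in>V. w = v \<or> w = u \<or> E w u"
  shows False
proof -
  note F = sg_facts[OF sg]
  obtain z where z: "E v z" "z \<in> V" using neighbor[OF conn u v uv] by blast
  show False
  proof (cases "z = u")
    case True
    have "dom2 V E u u" using dm z True u unfolding dom2_def by auto
    then show False using L_small[OF sg g3] by blast
  next
    case False
    have "z \<noteq> v" using z F(5) by auto
    then have "E z u" using dm z False by auto
    then have "dom2 V E u z" using dm z u F(2) unfolding dom2_def by auto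
    then show False using L_small[OF sg g3] by blast
  qed
qed

lemma vcrit:
  assumes sg: "simple_graph V E" and g3: "gamma_c V E = 3" and conn: "graph_connected V E"
    and vc: "vertex_critical 3 V E" and v: "v \<in> V"
  shows "\<exists>p q. p \<in> V \<and> q \<in> V \<and> p \<noteq> v \<and> q \<noteq> v \<and> p \<noteq> q \<and> E p q \<and> \<not> E p v \<and> \<not> E q v \<and>
     (\<forall>w\<in>V. w = v \<or> w = p \<or> w = q \<or> E w p \<or> E w q)"
proof -
  note F = sg_facts[OF sg]
  have tc: "two_connected V E" and lt: "gamma_c (V - {v}) (del_vertex E v) < 3"
    using vc v unfolding vertex_critical_def by auto
  have gc: "graph_connected (V - {v}) (del_vertex E v)" using tc v unfolding two_connected_def by auto
  have cdsV: "connected_dominating (V - {v}) (del_vertex E v) (V - {v})"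
    using gc unfolding connected_dominating_def dominating_def graph_connected_def by auto
  have irr: "\<And>z. \<not> del_vertex E v z z" using F(5) unfolding del_vertex_def by auto
  have finV: "finite (V - {v})" using F(1) by simp
  obtain s t where d: "dom2 (V - {v}) (del_vertex E v) s t"
    using gamma_lt3[where E="del_vertex E v" and V="V - {v}", OF irr finV cdsV lt] by blast
  then have st: "s \<in> V" "t \<in> V" "s \<noteq> v" "t \<noteq> v" "s = t \<or> E s t"
    and dm: "\<forall>w\<in>V. w = v \<or> w = s \<or> w = t \<or> E w s \<or> E w t"
    unfolding dom2_def del_vertex_def by auto
  have ns: "\<not> E s v"
  proof
    assume "E s v"
    then have "dom2 V E s t" using st dm F(2) unfolding dom2_def by auto
    then show False using L_small[OF sg g3] by blast
  qed
  have nt: "\<not> E t v"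
  proof
    assume "E t v"
    then have "dom2 V E s t" using st dm F(2) unfolding dom2_def by auto
    then show False using L_small[OF sg g3] by blast
  qed
  have "s \<noteq> t"
  proof
    assume "s = t"
    then have "\<forall>w\<in>V. w = v \<or> w = s \<or> E w s" using dm by auto
    then show False using no_almost[OF sg g3 conn st(1) v st(3)] by blast
  qed
  then show ?thesis using st dm ns nt by blast
qed

lemma ecrit:
  assumes sg: "simple_graph V E" and g3: "gamma_c V E = 3" and conn: "graph_connected V E"
    and ec: "edge_critical 3 V E" and u: "u \<in> V" and v: "v \<in> V" and uv: "u \<noteq> v" and nuv: "\<not> E u v"
  shows "\<exists>s t. dom2 V (add_edge E u v) s t"
proof -
  note F = sg_facts[OF sg]
  have lt: "gamma_c V (add_edge E u v) < 3" using ec u v uv nuv unfolding edge_critical_def by auto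
  have irr: "\<And>z. \<not> add_edge E u v z z" using F(5) uv unfolding add_edge_def by auto
  have ne: "V \<noteq> {}" using u by auto
  have pth: "(\<lambda>a b. add_edge E u v a b \<and> a \<in> V \<and> b \<in> V)\<^sup>*\<^sup>* x y" if "x \<in> V" "y \<in> V" for x y
  proof -
    have "(\<lambda>a b. E a b \<and> a \<in> V \<and> b \<in> V)\<^sup>*\<^sup>* x y"
      using conn that unfolding graph_connected_def induced_connected_def by auto
    then show ?thesis using mono_rtranclp[of "\<lambda>a b. E a b \<and> a \<in> V \<and> b \<in> V"
        "\<lambda>a b. add_edge E u v a b \<and> a \<in> V \<and> b \<in> V"] unfolding add_edge_def by blast
  qed
  have cdsV: "connected_dominating V (add_edge E u v) V"
    unfolding connected_dominating_def dominating_def induced_connected_def using ne pth by auto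
  show ?thesis using gamma_lt3[where E="add_edge E u v" and V=V, OF irr F(1) cdsV lt] .
qed


lemma core:
  assumes sg: "simple_graph V E" and conn: "graph_connected V E" and g3: "gamma_c V E = 3"
    and vc: "vertex_critical 3 V E" and ec: "edge_critical 3 V E"
    and indI: "independent_set V E I" and mc: "max_clique V E W"
    and minW: "\<forall>W'. max_clique V E W' \<longrightarrow> card (I \<inter> W) \<le> card (I \<inter> W')"
    and IW: "I \<inter> W = {x}" and Vdec: "V = I \<union> W \<union> {a, b}"
    and aI: "a \<notin> I" and aW: "a \<notin> W" and bI: "b \<notin> I" and bW: "b \<notin> W" and ab: "a \<noteq> b"
    and y0: "y0 \<in> W" "y0 \<noteq> x" and nxb: "\<not> E x b"
  shows False
proof -
  note F = sg_facts[OF sg]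
  have fin: "finite V" by (rule F(1))
  have sym: "\<And>u v. E u v \<Longrightarrow> E v u" by (rule F(2))
  have irr: "\<And>u. \<not> E u u" by (rule F(5))
  have IV: "I \<subseteq> V" and Iind: "\<And>i j. i \<in> I \<Longrightarrow> j \<in> I \<Longrightarrow> \<not> E i j"
    using indI unfolding independent_set_def by auto
  have WV: "W \<subseteq> V" and Wcl: "\<And>u v. u \<in> W \<Longrightarrow> v \<in> W \<Longrightarrow> u \<noteq> v \<Longrightarrow> E u v"
    and Wmax: "\<And>W'. clique V E W' \<Longrightarrow> card W' \<le> card W"
    using mc unfolding max_clique_def clique_def by auto
  have finW: "finite W" using WV fin finite_subset by auto
  have xI: "x \<in> I" and xW: "x \<in> W" using IW by auto
  have aV: "a \<in> V" and bV: "b \<in> V" using Vdec by auto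
  have Vc: "\<And>w. w \<in> V \<Longrightarrow> w \<in> I \<or> w \<in> W \<or> w = a \<or> w = b" using Vdec by auto
  have IWx: "\<And>w. w \<in> I \<Longrightarrow> w \<in> W \<Longrightarrow> w = x" using IW by auto
  have xV: "x \<in> V" using xI IV by auto

  have C1: "E x a \<and> \<not> E a y \<and> (\<exists>r. r \<in> V \<and> r \<notin> W \<and> r \<noteq> a \<and> E a r \<and> \<not> E r y \<and>
      (\<forall>w\<in>V. w = y \<or> w = a \<or> w = r \<or> E w a \<or> E w r))" if y: "y \<in> W" "y \<noteq> x" for y
  proof -
    have yV: "y \<in> V" using y WV by auto
    obtain p q where pq: "p \<in> V" "q \<in> V" "p \<noteq> y" "q \<noteq> y" "p \<noteq> q" "E p q" "\<not> E p y" "\<not> E q y"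
      and dm: "\<forall>w\<in>V. w = y \<or> w = p \<or> w = q \<or> E w p \<or> E w q"
      using vcrit[OF sg g3 conn vc yV] by blast
    have pW: "p \<notin> W" using pq Wcl y by blast
    have qW: "q \<notin> W" using pq Wcl y by blast
    have "x \<noteq> p" "x \<noteq> q" using pW qW xW by auto
    then have "E x p \<or> E x q" using dm xV y(2) by auto
    then show ?thesis
    proof
      assume xp: "E x p"
      have "p \<notin> I" using xp Iind xI by blast
      have "p \<noteq> b" using xp nxb by auto
      then have pa: "p = a" using Vc[OF pq(1)] pW \<open>p \<notin> I\<close> by auto
      show ?thesis
      proof (intro conjI exI[of _ q])
        show "\<forall>w\<in>V. w = y \<or> w = a \<or> w = q \<or> E w a \<or> E w q" using dm pa by auto
      qed (use xp pq qW pa in auto)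
    next
      assume xq: "E x q"
      have "q \<notin> I" using xq Iind xI by blast
      have "q \<noteq> b" using xq nxb by auto
      then have qa: "q = a" using Vc[OF pq(2)] qW \<open>q \<notin> I\<close> by auto
      show ?thesis
      proof (intro conjI exI[of _ p])
        show "\<forall>w\<in>V. w = y \<or> w = a \<or> w = p \<or> E w a \<or> E w p" using dm qa by auto
      qed (use xq pq pW qa sym in auto)
    qed
  qed
  have xa: "E x a" using C1 y0 by blast
  have aWn: "\<And>y. y \<in> W \<Longrightarrow> y \<noteq> x \<Longrightarrow> \<not> E a y" using C1 by blast

  obtain q where q: "q \<in> I" "q \<noteq> x" "E b q"
    and dmx: "\<forall>w\<in>V. w = x \<or> w = b \<or> w = q \<or> E w b \<or> E w q"
  proof -
    obtain p q where pq: "p \<in> V" "q \<in> V" "p \<noteq> x" "q \<noteq> x" "p \<noteq> q" "E p q" "\<not> E p x" "\<not> E q x"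
      and dm: "\<forall>w\<in>V. w = x \<or> w = p \<or> w = q \<or> E w p \<or> E w q"
      using vcrit[OF sg g3 conn vc xV] by blast
    have "p \<notin> W" using pq Wcl xW by blast
    have "q \<notin> W" using pq Wcl xW by blast
    have "p \<noteq> a" "q \<noteq> a" using pq xa sym by auto
    have "p \<in> I \<or> p = b" "q \<in> I \<or> q = b" using Vc[OF pq(1)] Vc[OF pq(2)] \<open>p \<notin> W\<close> \<open>q \<notin> W\<close> \<open>p \<noteq> a\<close> \<open>q \<noteq> a\<close> by auto
    moreover have "\<not> (p \<in> I \<and> q \<in> I)" using Iind pq by blast
    ultimately have "(p = b \<and> q \<in> I) \<or> (q = b \<and> p \<in> I)" using pq by auto
    then show ?thesis
    proof
      assume "p = b \<and> q \<in> I" then show ?thesis using that[of q] pq dm by auto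
    next
      assume "q = b \<and> p \<in> I" then show ?thesis using that[of p] pq dm sym by auto
    qed
  qed

  have F1: "\<not> (E a b \<and> (\<forall>i\<in>I. i \<noteq> x \<longrightarrow> E a i))"
  proof
    assume h: "E a b \<and> (\<forall>i\<in>I. i \<noteq> x \<longrightarrow> E a i)"
    have "dom2 V E x a" unfolding dom2_def
    proof (intro conjI ballI)
      fix w assume w: "w \<in> V"
      show "w = x \<or> w = a \<or> E w x \<or> E w a" using Vc[OF w] h Wcl[of w x] xW sym by blast
    qed (use xV aV xa in auto)
    then show False using L_small[OF sg g3] by blast
  qed

  have C6: "\<forall>i\<in>I. i \<noteq> x \<longrightarrow> E a i"
    if y: "y \<in> W" "y \<noteq> x" and r: "r \<in> I" "E a r"
      and dm: "\<forall>w\<in>V. w = y \<or> w = a \<or> w = r \<or> E w a \<or> E w r" for y r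
  proof (intro ballI impI)
    fix i assume i: "i \<in> I" "i \<noteq> x"
    have "i \<noteq> y" using IWx i y by auto
    moreover have "i \<noteq> a" using aI i by auto
    moreover have "i \<in> V" using i IV by auto
    ultimately have "i = r \<or> E i a \<or> E i r" using dm by auto
    then show "E a i" using r i Iind sym by auto
  qed

  obtain r where r: "r \<in> V" "r \<notin> W" "r \<noteq> a" "E a r" "\<not> E r y0"
    and dmr: "\<forall>w\<in>V. w = y0 \<or> w = a \<or> w = r \<or> E w a \<or> E w r"
    using C1[OF y0] by blast
  show False
  proof (cases "r = b")
    case True
    have Eab: "E a b" using r True by simp
    have single: "y1 = y0" if y1: "y1 \<in> W" "y1 \<noteq> x" for y1
    proof (rule ccontr)
      assume ne: "y1 \<noteq> y0"
      have y1V: "y1 \<in> V" using WV y1 by auto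
      have "\<not> E y1 a" using aWn[OF y1] sym by blast
      moreover have "y1 \<noteq> a" "y1 \<noteq> b" using aW bW y1 by auto
      ultimately have "E y1 b" using dmr y1V ne True by auto
      obtain r1 where r1: "r1 \<in> V" "r1 \<notin> W" "r1 \<noteq> a" "E a r1" "\<not> E r1 y1"
        and dm1: "\<forall>w\<in>V. w = y1 \<or> w = a \<or> w = r1 \<or> E w a \<or> E w r1"
        using C1[OF y1] by blast
      have "r1 \<noteq> b" using \<open>E y1 b\<close> r1 sym by auto
      then have "r1 \<in> I" using Vc[OF r1(1)] r1 by auto
      then have "\<forall>i\<in>I. i \<noteq> x \<longrightarrow> E a i" using C6[OF y1 _ r1(4) dm1] by blast
      then show False using F1 Eab by blast
    qed
    have Weq: "W = {x, y0}"
    proof (intro equalityI subsetI)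
      fix w assume "w \<in> W" then show "w \<in> {x, y0}" using single[of w] by blast
    qed (use xW y0 in auto)
    have cW: "card W = 2" using Weq y0 by simp
    have cl2: "clique V E {a, b}" unfolding clique_def using aV bV Eab sym by auto
    have "card {a, b} = 2" using ab by simp
    then have "max_clique V E {a, b}" unfolding max_clique_def using cl2 Wmax cW by auto
    then have "card (I \<inter> W) \<le> card (I \<inter> {a, b})" using minW by blast
    moreover have "I \<inter> {a, b} = {}" using aI bI by auto
    ultimately show False using IW by simp
  next
    case False
    have rI: "r \<in> I" using Vc[OF r(1)] r False by auto
    have aIall: "\<forall>i\<in>I. i \<noteq> x \<longrightarrow> E a i" using C6[OF y0 rI r(4) dmr] by blast
    have nab: "\<not> E a b" using F1 aIall by blast
    have bWall: "E b y1" if y1: "y1 \<in> W" "y1 \<noteq> x" for y1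
    proof (rule ccontr)
      assume nb: "\<not> E b y1"
      have y1V: "y1 \<in> V" using WV y1 by auto
      have by1: "b \<noteq> y1" using bW y1 by auto
      let ?E' = "add_edge E b y1"
      have E'sym: "\<And>u v. ?E' u v \<Longrightarrow> ?E' v u" using sym unfolding add_edge_def by blast
      have kn: False if d: "dom2 V ?E' s t" and sb: "s \<noteq> b" "t \<noteq> b" and sy: "s \<noteq> y1" "t \<noteq> y1" for s t
      proof -
        have "dom2 V E s t" using d sb sy unfolding dom2_def add_edge_def by auto
        then show False using L_small[OF sg g3] by blast
      qed
      have kb: False if d: "dom2 V ?E' b t" for t
      proof -
        have tV: "t \<in> V" and c: "b = t \<or> ?E' b t" and dm: "\<forall>w\<in>V. w = b \<or> w = t \<or> ?E' w b \<or> ?E' w t"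
          using d unfolding dom2_def by auto
        have ay1: "a \<noteq> y1" using aW y1 by auto
        have "a = t \<or> E a t" using dm aV ab ay1 nab unfolding add_edge_def by auto
        moreover have "a \<noteq> t"
        proof
          assume "a = t"
          then show False using c ab nab ay1 sym unfolding add_edge_def by auto
        qed
        ultimately have at: "E a t" by simp
        have "t \<noteq> y1" using at aWn[OF y1] by auto
        have "t \<noteq> b" using at nab by auto
        have "E b t" using c \<open>t \<noteq> y1\<close> \<open>t \<noteq> b\<close> unfolding add_edge_def by auto
        have "t \<noteq> x" using \<open>E b t\<close> nxb sym by auto
        have "t \<notin> W" using \<open>t \<noteq> x\<close> at aWn by auto
        have "t \<noteq> a" using at irr by auto
        then have tI: "t \<in> I" using Vc[OF tV] \<open>t \<notin> W\<close> \<open>t \<noteq> b\<close> by auto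
        have "x \<noteq> b" "x \<noteq> y1" using xW bW y1 by auto
        then have "E x b \<or> E x t" using dm xV \<open>t \<noteq> x\<close> unfolding add_edge_def by auto
        then show False using nxb Iind[OF xI tI] by auto
      qed
      have ky: "\<forall>i\<in>I. i \<noteq> x \<longrightarrow> E y1 i" if d: "dom2 V ?E' y1 t" and tb: "t \<noteq> b" for t
      proof -
        have tV: "t \<in> V" and c: "y1 = t \<or> ?E' y1 t" and dm: "\<forall>w\<in>V. w = y1 \<or> w = t \<or> ?E' w y1 \<or> ?E' w t"
          using d unfolding dom2_def by auto
        have ay1: "a \<noteq> y1" using aW y1 by auto
        have nay: "\<not> E a y1" using aWn[OF y1] .
        have "a = t \<or> E a t" using dm aV ab ay1 nay unfolding add_edge_def by auto
        moreover have "a \<noteq> t"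
        proof
          assume "a = t"
          then show False using c ab ay1 nay sym by1 unfolding add_edge_def by auto
        qed
        ultimately have at: "E a t" by simp
        have "t \<noteq> y1" using at nay by auto
        have "t \<notin> W \<or> t = x" using at aWn by auto
        moreover have "t \<noteq> a" using at irr by auto
        ultimately have tI: "t \<in> I" using Vc[OF tV] tb xI by auto
        have yt: "E y1 t" using c \<open>t \<noteq> y1\<close> tb by1 unfolding add_edge_def by auto
        show ?thesis
        proof (intro ballI impI)
          fix i assume i: "i \<in> I" "i \<noteq> x"
          have "i \<noteq> y1" using IWx i y1 by auto
          moreover have "i \<noteq> b" using i bI by auto
          moreover have "i \<in> V" using i IV by auto
          ultimately have "i = t \<or> E i y1 \<or> E i t" using dm unfolding add_edge_def by auto
          then show "E y1 i" using yt Iind[OF i(1) tI] sym by auto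
        qed
      qed
      obtain s t where d: "dom2 V ?E' s t" using ecrit[OF sg g3 conn ec bV y1V by1 nb] by blast
      have yI: "\<forall>i\<in>I. i \<noteq> x \<longrightarrow> E y1 i"
      proof (cases "s = b \<or> t = b")
        case True
        then show ?thesis
        proof
          assume "s = b" then show ?thesis using kb d by blast
        next
          assume "t = b" then show ?thesis using kb dom2_sym[OF E'sym d] by blast
        qed
      next
        case False
        then have sb: "s \<noteq> b" "t \<noteq> b" by auto
        show ?thesis
        proof (cases "s = y1")
          case True then show ?thesis using ky d sb by blast
        next
          case False
          show ?thesis
          proof (cases "t = y1")
            case True then show ?thesis using ky dom2_sym[OF E'sym d] sb by blast
          next
            case False
            then show ?thesis using kn d sb \<open>s \<noteq> y1\<close> by blast
          qed
        qed
      qed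
      obtain r1 where r1: "r1 \<in> V" "r1 \<notin> W" "r1 \<noteq> a" "E a r1" "\<not> E r1 y1"
        using C1[OF y1] by blast
      have "r1 \<noteq> b" using r1(4) nab by auto
      then have "r1 \<in> I" "r1 \<noteq> x" using Vc[OF r1(1)] r1 xW by auto
      then show False using yI r1(5) sym by blast
    qed
    define W' where "W' = insert b (W - {x})"
    have clW': "clique V E W'" unfolding clique_def W'_def
      using bV WV Wcl bWall sym by auto
    have "card W' = Suc (card (W - {x}))" unfolding W'_def using finW bW by simp
    moreover have "card (W - {x}) = card W - 1" using xW finW by simp
    moreover have "card W > 0" using xW finW card_gt_0_iff by blast
    ultimately have "card W' = card W" by simp
    then have "max_clique V E W'" unfolding max_clique_def using clW' Wmax by auto
    then have "card (I \<inter> W) \<le> card (I \<inter> W')" using minW by blast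
    moreover have "I \<inter> W' = {}" unfolding W'_def using bI IW by auto
    ultimately show False using IW by simp
  qed
qed


theorem lemma3p5:
  fixes V :: "'a set" and E :: "'a \<Rightarrow> 'a \<Rightarrow> bool" and I W :: "'a set"
  assumes "simple_graph V E"
    and "graph_connected V E"
    and "maximal_vertex_critical 3 V E"
    and "max_independent_set V E I"
    and "max_clique V E W"
    and "\<forall>W'. max_clique V E W' \<longrightarrow> card (I \<inter> W) \<le> card (I \<inter> W')"
    and "card I + card W = card V - 1"
  shows "card (W \<inter> I) = 0"
proof (rule ccontr)
  assume nz: "card (W \<inter> I) \<noteq> 0"
  note sg = assms(1) and conn = assms(2) and mc = assms(5) and minW = assms(6) and cnt = assms(7)
  note F = sg_facts[OF sg]
  have ec: "edge_critical 3 V E" and vc: "vertex_critical 3 V E"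
    using assms(3) unfolding maximal_vertex_critical_def by auto
  have g3: "gamma_c V E = 3" using ec unfolding edge_critical_def by auto
  have indI: "independent_set V E I" using assms(4) unfolding max_independent_set_def by auto
  have IV: "I \<subseteq> V" and Iind: "\<And>i j. i \<in> I \<Longrightarrow> j \<in> I \<Longrightarrow> \<not> E i j"
    using indI unfolding independent_set_def by auto
  have WV: "W \<subseteq> V" and Wcl: "\<And>u v. u \<in> W \<Longrightarrow> v \<in> W \<Longrightarrow> u \<noteq> v \<Longrightarrow> E u v"
    and Wmax: "\<And>W'. clique V E W' \<Longrightarrow> card W' \<le> card W"
    using mc unfolding max_clique_def clique_def by auto
  have finV: "finite V" by (rule F(1))
  have finI: "finite I" using IV finV finite_subset by auto
  have finW: "finite W" using WV finV finite_subset by auto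
  have "W \<inter> I \<noteq> {}" using nz by (metis card.empty)
  then obtain x where xWI: "x \<in> W \<inter> I" by blast
  have IW: "I \<inter> W = {x}"
  proof (intro equalityI subsetI)
    fix z assume z: "z \<in> I \<inter> W"
    show "z \<in> {x}"
    proof (rule ccontr)
      assume "z \<notin> {x}"
      then have "E z x" using Wcl z xWI by auto
      then show False using Iind z xWI by auto
    qed
  qed (use xWI in auto)
  have "I \<noteq> {}" using xWI by auto
  then have cI: "card I \<ge> 1" using finI by (simp add: Suc_le_eq card_gt_0_iff)
  have cUn: "card (I \<union> W) + card (I \<inter> W) = card I + card W" using card_Un_Int[OF finI finW] by simp
  have "card (I \<inter> W) = 1" using IW by simp
  then have cU: "card (I \<union> W) + 2 = card V" using cUn cnt cI by linarith
  have sub: "I \<union> W \<subseteq> V" using IV WV by auto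
  have "card (V - (I \<union> W)) = 2" using card_Diff_subset[OF finite_subset[OF sub finV] sub] cU by simp
  then obtain a b where ab: "V - (I \<union> W) = {a, b}" "a \<noteq> b" unfolding card_2_iff by blast
  have aV: "a \<in> V" and bV: "b \<in> V" and aI: "a \<notin> I" and aW: "a \<notin> W" and bI: "b \<notin> I" and bW: "b \<notin> W"
    using ab(1) by blast+
  have Vdec: "V = I \<union> W \<union> {a, b}" using ab(1) sub by blast
  have xV: "x \<in> V" "x \<in> W" "x \<in> I" using xWI IV by auto
  have "a \<noteq> x" using aW xV by auto
  then obtain z where z: "E x z" "z \<in> V" using neighbor[OF conn aV xV(1)] by blast
  have "x \<noteq> z" using z F(5) by auto
  have "clique V E {x, z}" unfolding clique_def using z xV F(2) by auto
  then have "card {x, z} \<le> card W" using Wmax by blast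
  then have "card W \<ge> 2" using \<open>x \<noteq> z\<close> by simp
  have "W - {x} \<noteq> {}"
  proof
    assume "W - {x} = {}"
    then have "W \<subseteq> {x}" by auto
    then have "card W \<le> 1" using card_mono[of "{x}" W] by simp
    then show False using \<open>card W \<ge> 2\<close> by simp
  qed
  then obtain y0 where y0: "y0 \<in> W" "y0 \<noteq> x" by blast
  obtain p q where pq: "p \<in> V" "q \<in> V" "p \<noteq> x" "q \<noteq> x" "p \<noteq> q" "E p q" "\<not> E p x" "\<not> E q x"
    using vcrit[OF sg g3 conn vc xV(1)] by blast
  have "p \<notin> W" "q \<notin> W" using pq Wcl xV by blast+
  have "p \<notin> I \<or> q \<notin> I" using Iind pq by blast
  then have "(p \<in> {a, b} \<and> \<not> E x p) \<or> (q \<in> {a, b} \<and> \<not> E x q)"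
    using Vdec pq \<open>p \<notin> W\<close> \<open>q \<notin> W\<close> F(2) by blast
  then have "\<not> E x a \<or> \<not> E x b" by blast
  then show False
  proof
    assume "\<not> E x b"
    then show False using core[OF sg conn g3 vc ec indI mc minW IW Vdec aI aW bI bW ab(2) y0] by blast
  next
    assume nxa: "\<not> E x a"
    have Vdec': "V = I \<union> W \<union> {b, a}" using Vdec by auto
    show False using core[OF sg conn g3 vc ec indI mc minW IW Vdec' bI bW aI aW _ y0 nxa] ab(2) by blast
  qed
qed

end
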